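(* For each $N$, let $(\Sigma_t)_{t\ge0}$ be a time-homogeneous Markov chain on a finite state space and $V$ a real function on that space. Suppose there are constants $V_{\max},\bar\eta,\gamma,C,C',K>0$ independent of $N$ such that for all $N$ and all $t\ge0$, almost surely: $0\le V(\Sigma_t)\le V_{\max}$; if $V(\Sigma_t)>\bar\eta$ then $\mathbb E[V(\Sigma_{t+1})-V(\Sigma_t)\mid\Sigma_t]\le-\gamma$ and $\mathbb E[(V(\Sigma_{t+1})-V(\Sigma_t))^+\mid\Sigma_t]\le K/\sqrt N$; if $\bar\eta/2<V(\Sigma_t)\le\bar\eta$ then $\mathbb E[(V(\Sigma_{t+1})-V(\Sigma_t))^+\mid\Sigma_t]\le Ke^{-CN}$; if $V(\Sigma_t)\le\bar\eta/2$ then $\mathbb P(V(\Sigma_{t+1})>\bar\eta/2\mid\Sigma_t)\le Ke^{-C'N}$. Then there are constants $C''>0$, $K''$ independent of $N$ such that for all sufficiently large $N$, $$\mathbb P(V(\Sigma_\infty)>\bar\eta)\le K''e^{-C''N}.$$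
   Context: For a function $f$ of the chain state, $\mathbb E[f(\Sigma_\infty)]$ denotes the long-run average $\lim_{T\to\infty}\frac1T\sum_{t=0}^{T-1}\mathbb E[f(\Sigma_t)]$ (which exists for a finite-state Markov chain, possibly depending on the initial state); in particular $\mathbb P(V(\Sigma_\infty)>\bar\eta)=\lim_{T\to\infty}\frac1T\sum_{t<T}\mathbb P(V(\Sigma_t)>\bar\eta)$. *)

theory Defs
  imports "HOL-Probability.Probability"
begin

definition mc_dist :: "('a \<Rightarrow> 'a pmf) \<Rightarrow> 'a pmf \<Rightarrow> nat \<Rightarrow> 'a pmf" where
  "mc_dist Q \<mu> t = ((\<lambda>p. bind_pmf p Q) ^^ t) \<mu>"

definition longrun_prob :: "('a \<Rightarrow> 'a pmf) \<Rightarrow> 'a pmf \<Rightarrow> 'a set \<Rightarrow> real" where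
  "longrun_prob Q \<mu> A = lim (\<lambda>T. (\<Sum>t<T. measure_pmf.prob (mc_dist Q \<mu> t) A) / real T)"

end

theory Submission
  imports Defs
begin


definition mm :: "'a set \<Rightarrow> ('a \<Rightarrow> 'a \<Rightarrow> real) \<Rightarrow> ('a \<Rightarrow> 'a \<Rightarrow> real) \<Rightarrow> 'a \<Rightarrow> 'a \<Rightarrow> real" where
  "mm S A B x z = (\<Sum>y\<in>S. A x y * B y z)"

primrec Pt :: "('a \<Rightarrow> 'a pmf) \<Rightarrow> 'a set \<Rightarrow> nat \<Rightarrow> 'a \<Rightarrow> 'a \<Rightarrow> real" where
  "Pt Q S 0 x z = (if x = z then 1 else 0)"
| "Pt Q S (Suc t) x z = (\<Sum>y\<in>S. Pt Q S t x y * pmf (Q y) z)"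

definition Av :: "('a \<Rightarrow> 'a pmf) \<Rightarrow> 'a set \<Rightarrow> nat \<Rightarrow> 'a \<Rightarrow> 'a \<Rightarrow> real" where
  "Av Q S T x z = (\<Sum>t<T. Pt Q S t x z) / real T"

lemma mc_Suc: "mc_dist Q \<mu> (Suc t) = bind_pmf (mc_dist Q \<mu> t) Q"
  by (simp add: mc_dist_def)

lemma mc_0: "mc_dist Q \<mu> 0 = \<mu>"
  by (simp add: mc_dist_def)

lemma mc_support:
  assumes "set_pmf \<mu> \<subseteq> S" "\<And>x. x \<in> S \<Longrightarrow> set_pmf (Q x) \<subseteq> S"
  shows "set_pmf (mc_dist Q \<mu> t) \<subseteq> S"
  by (induction t) (use assms in \<open>auto simp: mc_Suc mc_0\<close>)

lemma exp_fin:
  assumes "finite S" "set_pmf p \<subseteq> S"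
  shows "measure_pmf.expectation p f = (\<Sum>y\<in>S. pmf p y * f y)"
  using integral_measure_pmf[OF assms(1), of p f] assms(2) by auto

lemma pmf_bind_fin:
  assumes "finite S" "set_pmf p \<subseteq> S"
  shows "pmf (bind_pmf p Q) z = (\<Sum>y\<in>S. pmf p y * pmf (Q y) z)"
  unfolding pmf_bind using exp_fin[OF assms] .

lemma pmf_mc:
  assumes fin: "finite S" and mu: "set_pmf \<mu> \<subseteq> S" and cl: "\<And>x. x \<in> S \<Longrightarrow> set_pmf (Q x) \<subseteq> S"
  shows "pmf (mc_dist Q \<mu> t) z = (\<Sum>x\<in>S. pmf \<mu> x * Pt Q S t x z)"
proof (induction t arbitrary: z)
  case 0
  have "(\<Sum>x\<in>S. pmf \<mu> x * Pt Q S 0 x z) = (\<Sum>x\<in>S. if x = z then pmf \<mu> z else 0)"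
    by (rule sum.cong) auto
  also have "\<dots> = pmf \<mu> z"
    using fin mu by (auto simp: sum.delta' pmf_eq_0_set_pmf)
  finally show ?case by (simp add: mc_0)
next
  case (Suc t)
  have "pmf (mc_dist Q \<mu> (Suc t)) z = (\<Sum>y\<in>S. pmf (mc_dist Q \<mu> t) y * pmf (Q y) z)"
    unfolding mc_Suc by (rule pmf_bind_fin[OF fin mc_support[OF mu cl]])
  also have "\<dots> = (\<Sum>y\<in>S. (\<Sum>x\<in>S. pmf \<mu> x * Pt Q S t x y) * pmf (Q y) z)"
    using Suc by simp
  also have "\<dots> = (\<Sum>x\<in>S. pmf \<mu> x * (\<Sum>y\<in>S. Pt Q S t x y * pmf (Q y) z))"
    apply (simp only: sum_distrib_right sum_distrib_left)
    apply (subst sum.swap)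
    apply (simp add: mult.assoc)
    done
  finally show ?case by simp
qed

lemma Pt_pmf:
  assumes fin: "finite S" and x: "x \<in> S" and cl: "\<And>x. x \<in> S \<Longrightarrow> set_pmf (Q x) \<subseteq> S"
  shows "Pt Q S t x z = pmf (mc_dist Q (return_pmf x) t) z"
proof -
  have "pmf (mc_dist Q (return_pmf x) t) z = (\<Sum>x'\<in>S. pmf (return_pmf x) x' * Pt Q S t x' z)"
    by (rule pmf_mc[OF fin _ cl]) (use x in auto)
  also have "\<dots> = (\<Sum>x'\<in>S. if x' = x then Pt Q S t x z else 0)"
    by (rule sum.cong) (auto simp: pmf_return)
  also have "\<dots> = Pt Q S t x z" using fin x by (simp add: sum.delta')
  finally show ?thesis by simp
qed

lemma Pt_bounds:
  assumes fin: "finite S" and x: "x \<in> S" and cl: "\<And>x. x \<in> S \<Longrightarrow> set_pmf (Q x) \<subseteq> S"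
  shows "0 \<le> Pt Q S t x z" "Pt Q S t x z \<le> 1"
  using Pt_pmf[OF assms] by (auto simp: pmf_le_1)

lemma mm_assoc:
  assumes "finite S"
  shows "mm S (mm S A B) C x z = mm S A (mm S B C) x z"
  unfolding mm_def
    apply (simp only: sum_distrib_right sum_distrib_left)
    apply (subst sum.swap)
    apply (simp add: mult.assoc)
    done

lemma mm_cong:
  assumes "\<And>y. y \<in> S \<Longrightarrow> A x y = A' x y" "\<And>y. y \<in> S \<Longrightarrow> B y z = B' y z"
  shows "mm S A B x z = mm S A' B' x z"
  unfolding mm_def using assms by (intro sum.cong) auto

lemma Pt_Suc_mm: "Pt Q S (Suc t) x z = mm S (Pt Q S t) (\<lambda>x z. pmf (Q x) z) x z"
  by (simp add: mm_def)

lemma mm_Pt0_right: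
  assumes "finite S" "z \<in> S"
  shows "mm S A (Pt Q S 0) x z = A x z"
proof -
  have "mm S A (Pt Q S 0) x z = (\<Sum>y\<in>S. if y = z then A x z else 0)"
    unfolding mm_def by (rule sum.cong) auto
  then show ?thesis using assms by (simp add: sum.delta')
qed

lemma mm_Pt0_left:
  assumes "finite S" "x \<in> S"
  shows "mm S (Pt Q S 0) A x z = A x z"
proof -
  have "mm S (Pt Q S 0) A x z = (\<Sum>y\<in>S. if y = x then A x z else 0)"
    unfolding mm_def by (rule sum.cong) auto
  then show ?thesis using assms by (simp add: sum.delta')
qed


lemma Pt_comm:
  assumes fin: "finite S" and cl: "\<And>x. x \<in> S \<Longrightarrow> set_pmf (Q x) \<subseteq> S"
  shows "x \<in> S \<Longrightarrow> z \<in> S \<Longrightarrow> mm S (\<lambda>x z. pmf (Q x) z) (Pt Q S t) x z = mm S (Pt Q S t) (\<lambda>x z. pmf (Q x) z) x z"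
proof (induction t arbitrary: x z)
  case 0
  then show ?case using fin by (simp add: mm_Pt0_right mm_Pt0_left del: Pt.simps)
next
  case (Suc t)
  let ?P = "\<lambda>x z. pmf (Q x) z"
  have "mm S ?P (Pt Q S (Suc t)) x z = mm S ?P (mm S (Pt Q S t) ?P) x z"
    by (rule mm_cong) (simp_all add: mm_def)
  also have "\<dots> = mm S (mm S ?P (Pt Q S t)) ?P x z" by (simp add: mm_assoc fin)
  also have "\<dots> = mm S (mm S (Pt Q S t) ?P) ?P x z"
    by (rule mm_cong) (use Suc in auto)
  also have "\<dots> = mm S (Pt Q S (Suc t)) ?P x z"
    by (rule mm_cong) (simp_all add: mm_def)
  finally show ?case .
qed

lemma Pt_left:
  assumes fin: "finite S" and cl: "\<And>x. x \<in> S \<Longrightarrow> set_pmf (Q x) \<subseteq> S"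
  shows "x \<in> S \<Longrightarrow> z \<in> S \<Longrightarrow> Pt Q S (Suc t) x z = mm S (\<lambda>x z. pmf (Q x) z) (Pt Q S t) x z"
  using Pt_comm[where S=S and Q=Q, OF fin cl] by (simp add: Pt_Suc_mm del: Pt.simps)

lemma Av_right:
  assumes fin: "finite S"
  shows "mm S (Av Q S T) (\<lambda>x z. pmf (Q x) z) x z = Av Q S T x z + (Pt Q S T x z - Pt Q S 0 x z) / real T"
proof -
  have "mm S (Av Q S T) (\<lambda>x z. pmf (Q x) z) x z = (\<Sum>y\<in>S. \<Sum>t<T. Pt Q S t x y * pmf (Q y) z) / real T"
    unfolding mm_def Av_def by (simp add: sum_divide_distrib sum_distrib_right)
  also have "\<dots> = (\<Sum>t<T. \<Sum>y\<in>S. Pt Q S t x y * pmf (Q y) z) / real T"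
    by (subst sum.swap) (rule refl)
  also have "\<dots> = (\<Sum>t<T. Pt Q S (Suc t) x z) / real T" by simp
  also have "(\<Sum>t<T. Pt Q S (Suc t) x z) = (\<Sum>t<T. Pt Q S t x z) + (Pt Q S T x z - Pt Q S 0 x z)"
    using sum_lessThan_telescope[of "\<lambda>t. Pt Q S t x z" T] by (simp add: sum_subtractf)
  finally show ?thesis by (simp only: Av_def[of Q S T x z] add_divide_distrib)
qed

lemma Av_left:
  assumes fin: "finite S" and cl: "\<And>x. x \<in> S \<Longrightarrow> set_pmf (Q x) \<subseteq> S"
    and xz: "x \<in> S" "z \<in> S"
  shows "mm S (\<lambda>x z. pmf (Q x) z) (Av Q S T) x z = Av Q S T x z + (Pt Q S T x z - Pt Q S 0 x z) / real T"
proof -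
  have "mm S (\<lambda>x z. pmf (Q x) z) (Av Q S T) x z = (\<Sum>y\<in>S. \<Sum>t<T. pmf (Q x) y * Pt Q S t y z) / real T"
    unfolding mm_def Av_def by (simp add: sum_divide_distrib sum_distrib_left)
  also have "\<dots> = (\<Sum>t<T. \<Sum>y\<in>S. pmf (Q x) y * Pt Q S t y z) / real T"
    by (subst sum.swap) (rule refl)
  also have "\<dots> = (\<Sum>t<T. mm S (\<lambda>x z. pmf (Q x) z) (Pt Q S t) x z) / real T"
    by (simp add: mm_def)
  also have "\<dots> = (\<Sum>t<T. Pt Q S (Suc t) x z) / real T"
    using Pt_left[where S=S and Q=Q, OF fin cl xz] by simp
  also have "(\<Sum>t<T. Pt Q S (Suc t) x z) = (\<Sum>t<T. Pt Q S t x z) + (Pt Q S T x z - Pt Q S 0 x z)"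
    using sum_lessThan_telescope[of "\<lambda>t. Pt Q S t x z" T] by (simp add: sum_subtractf)
  finally show ?thesis by (simp only: Av_def[of Q S T x z] add_divide_distrib)
qed

lemma err_lim:
  assumes fin: "finite S" and cl: "\<And>x. x \<in> S \<Longrightarrow> set_pmf (Q x) \<subseteq> S" and x: "x \<in> S"
  shows "(\<lambda>T. (Pt Q S T x z - Pt Q S 0 x z) / real T) \<longlonglongrightarrow> 0"
proof (rule Lim_null_comparison[OF _ lim_inverse_n'])
  show "\<forall>\<^sub>F T in sequentially. norm ((Pt Q S T x z - Pt Q S 0 x z) / real T) \<le> 1 / real T"
  proof (rule always_eventually, rule allI)
    fix T
    have "\<bar>Pt Q S T x z - Pt Q S 0 x z\<bar> \<le> 1"
      using Pt_bounds[where S=S and Q=Q, OF fin x cl, of T z] Pt_bounds[where S=S and Q=Q, OF fin x cl, of 0 z] by linarith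
    then show "norm ((Pt Q S T x z - Pt Q S 0 x z) / real T) \<le> 1 / real T"
      by (simp add: divide_right_mono)
  qed
qed

lemma Av_bounds:
  assumes fin: "finite S" and cl: "\<And>x. x \<in> S \<Longrightarrow> set_pmf (Q x) \<subseteq> S" and x: "x \<in> S"
  shows "0 \<le> Av Q S T x z \<and> Av Q S T x z \<le> 1"
proof -
  have "(\<Sum>t<T. Pt Q S t x z) \<le> (\<Sum>t<T. 1)" by (rule sum_mono) (use Pt_bounds[where S=S and Q=Q, OF fin x cl] in auto)
  moreover have "0 \<le> (\<Sum>t<T. Pt Q S t x z)" by (rule sum_nonneg) (use Pt_bounds[where S=S and Q=Q, OF fin x cl] in auto)
  ultimately show ?thesis unfolding Av_def
    by (cases "T = 0") (auto simp: divide_le_eq)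
qed



lemma limpt_fix:
  assumes fin: "finite S" and cl: "\<And>x. x \<in> S \<Longrightarrow> set_pmf (Q x) \<subseteq> S"
    and r: "strict_mono r"
    and L: "\<And>x z. x \<in> S \<Longrightarrow> z \<in> S \<Longrightarrow> (\<lambda>n. Av Q S (r n) x z) \<longlonglongrightarrow> L x z"
    and xz: "x \<in> S" "z \<in> S"
  shows "mm S L (\<lambda>x z. pmf (Q x) z) x z = L x z" "mm S (\<lambda>x z. pmf (Q x) z) L x z = L x z"
proof -
  let ?P = "\<lambda>x z. pmf (Q x) z"
  have e: "(\<lambda>n. (Pt Q S (r n) x z - Pt Q S 0 x z) / real (r n)) \<longlonglongrightarrow> 0"
    using LIMSEQ_subseq_LIMSEQ[OF err_lim[where S=S and Q=Q, OF fin cl xz(1)] r] by (simp add: o_def)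
  have "(\<lambda>n. mm S (Av Q S (r n)) ?P x z) \<longlonglongrightarrow> mm S L ?P x z"
    unfolding mm_def by (intro tendsto_sum tendsto_mult_right L xz) auto
  moreover have "(\<lambda>n. mm S (Av Q S (r n)) ?P x z) = (\<lambda>n. Av Q S (r n) x z + (Pt Q S (r n) x z - Pt Q S 0 x z) / real (r n))"
    using Av_right[OF fin] by simp
  moreover have "(\<lambda>n. Av Q S (r n) x z + (Pt Q S (r n) x z - Pt Q S 0 x z) / real (r n)) \<longlonglongrightarrow> L x z + 0"
    by (intro tendsto_add L xz e)
  ultimately have "(\<lambda>n. mm S (Av Q S (r n)) ?P x z) \<longlonglongrightarrow> L x z" by simp
  with \<open>(\<lambda>n. mm S (Av Q S (r n)) ?P x z) \<longlonglongrightarrow> mm S L ?P x z\<close>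
  show "mm S L ?P x z = L x z" by (rule LIMSEQ_unique)
  have "(\<lambda>n. mm S ?P (Av Q S (r n)) x z) \<longlonglongrightarrow> mm S ?P L x z"
    unfolding mm_def using xz by (intro tendsto_sum tendsto_mult_left L) auto
  moreover have "(\<lambda>n. mm S ?P (Av Q S (r n)) x z) = (\<lambda>n. Av Q S (r n) x z + (Pt Q S (r n) x z - Pt Q S 0 x z) / real (r n))"
    using Av_left[where S=S and Q=Q, OF fin cl xz] by simp
  moreover have "(\<lambda>n. Av Q S (r n) x z + (Pt Q S (r n) x z - Pt Q S 0 x z) / real (r n)) \<longlonglongrightarrow> L x z + 0"
    by (intro tendsto_add L xz e)
  ultimately have "(\<lambda>n. mm S ?P (Av Q S (r n)) x z) \<longlonglongrightarrow> L x z" by simp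
  with \<open>(\<lambda>n. mm S ?P (Av Q S (r n)) x z) \<longlonglongrightarrow> mm S ?P L x z\<close>
  show "mm S ?P L x z = L x z" by (rule LIMSEQ_unique)
qed

lemma mm_L_Pt:
  assumes fin: "finite S"
    and LP: "\<And>x z. x \<in> S \<Longrightarrow> z \<in> S \<Longrightarrow> mm S L (\<lambda>x z. pmf (Q x) z) x z = L x z"
  shows "x \<in> S \<Longrightarrow> z \<in> S \<Longrightarrow> mm S L (Pt Q S t) x z = L x z"
proof (induction t arbitrary: z)
  case 0
  then show ?case using fin by (simp add: mm_Pt0_right del: Pt.simps)
next
  case (Suc t)
  let ?P = "\<lambda>x z. pmf (Q x) z"
  have "mm S L (Pt Q S (Suc t)) x z = mm S L (mm S (Pt Q S t) ?P) x z"
    by (rule mm_cong) (simp_all add: mm_def)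
  also have "\<dots> = mm S (mm S L (Pt Q S t)) ?P x z" by (simp add: mm_assoc fin)
  also have "\<dots> = mm S L ?P x z"
    by (rule mm_cong) (use Suc in auto)
  also have "\<dots> = L x z" using LP Suc by blast
  finally show ?case .
qed

lemma mm_Pt_L:
  assumes fin: "finite S"
    and PL: "\<And>x z. x \<in> S \<Longrightarrow> z \<in> S \<Longrightarrow> mm S (\<lambda>x z. pmf (Q x) z) L x z = L x z"
  shows "x \<in> S \<Longrightarrow> z \<in> S \<Longrightarrow> mm S (Pt Q S t) L x z = L x z"
proof (induction t arbitrary: x)
  case 0
  then show ?case using fin by (simp add: mm_Pt0_left del: Pt.simps)
next
  case (Suc t)
  let ?P = "\<lambda>x z. pmf (Q x) z"
  have "mm S (Pt Q S (Suc t)) L x z = mm S (mm S (Pt Q S t) ?P) L x z"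
    by (rule mm_cong) (simp_all add: mm_def)
  also have "\<dots> = mm S (Pt Q S t) (mm S ?P L) x z" by (simp add: mm_assoc fin)
  also have "\<dots> = mm S (Pt Q S t) L x z"
    by (rule mm_cong) (use Suc PL in auto)
  also have "\<dots> = L x z" using Suc by blast
  finally show ?case .
qed

lemma mm_L_Av:
  assumes fin: "finite S"
    and LP: "\<And>x z. x \<in> S \<Longrightarrow> z \<in> S \<Longrightarrow> mm S L (\<lambda>x z. pmf (Q x) z) x z = L x z"
    and xz: "x \<in> S" "z \<in> S" and T: "T > 0"
  shows "mm S L (Av Q S T) x z = L x z"
proof -
  have "mm S L (Av Q S T) x z = (\<Sum>y\<in>S. \<Sum>t<T. L x y * Pt Q S t y z) / real T"
    unfolding mm_def Av_def by (simp add: sum_divide_distrib sum_distrib_left)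
  also have "\<dots> = (\<Sum>t<T. \<Sum>y\<in>S. L x y * Pt Q S t y z) / real T"
    by (subst sum.swap) (rule refl)
  also have "\<dots> = (\<Sum>t<T. mm S L (Pt Q S t) x z) / real T" by (simp add: mm_def)
  also have "\<dots> = (\<Sum>t<T. L x z) / real T" using mm_L_Pt[OF fin LP xz] by simp
  finally show ?thesis using T by simp
qed

lemma mm_Av_L:
  assumes fin: "finite S"
    and PL: "\<And>x z. x \<in> S \<Longrightarrow> z \<in> S \<Longrightarrow> mm S (\<lambda>x z. pmf (Q x) z) L x z = L x z"
    and xz: "x \<in> S" "z \<in> S" and T: "T > 0"
  shows "mm S (Av Q S T) L x z = L x z"
proof -
  have "mm S (Av Q S T) L x z = (\<Sum>y\<in>S. \<Sum>t<T. Pt Q S t x y * L y z) / real T"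
    unfolding mm_def Av_def by (simp add: sum_divide_distrib sum_distrib_right)
  also have "\<dots> = (\<Sum>t<T. \<Sum>y\<in>S. Pt Q S t x y * L y z) / real T"
    by (subst sum.swap) (rule refl)
  also have "\<dots> = (\<Sum>t<T. mm S (Pt Q S t) L x z) / real T" by (simp add: mm_def)
  also have "\<dots> = (\<Sum>t<T. L x z) / real T" using mm_Pt_L[OF fin PL xz] by simp
  finally show ?thesis using T by simp
qed

lemma limpt_unique:
  assumes fin: "finite S" and cl: "\<And>x. x \<in> S \<Longrightarrow> set_pmf (Q x) \<subseteq> S"
    and r1: "strict_mono r1"
    and L1: "\<And>x z. x \<in> S \<Longrightarrow> z \<in> S \<Longrightarrow> (\<lambda>n. Av Q S (r1 n) x z) \<longlonglongrightarrow> L1 x z"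
    and r2: "strict_mono r2"
    and L2: "\<And>x z. x \<in> S \<Longrightarrow> z \<in> S \<Longrightarrow> (\<lambda>n. Av Q S (r2 n) x z) \<longlonglongrightarrow> L2 x z"
    and xz: "x \<in> S" "z \<in> S"
  shows "L1 x z = L2 x z"
proof -
  have LP: "\<And>x z. x \<in> S \<Longrightarrow> z \<in> S \<Longrightarrow> mm S L1 (\<lambda>x z. pmf (Q x) z) x z = L1 x z"
    using limpt_fix(1)[where S=S and Q=Q, OF fin cl r1 L1] by blast
  have PL: "\<And>x z. x \<in> S \<Longrightarrow> z \<in> S \<Longrightarrow> mm S (\<lambda>x z. pmf (Q x) z) L2 x z = L2 x z"
    using limpt_fix(2)[where S=S and Q=Q, OF fin cl r2 L2] by blast
  have ev: "\<And>r::nat\<Rightarrow>nat. strict_mono r \<Longrightarrow> \<forall>\<^sub>F n in sequentially. r n > 0"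
  proof -
    fix r :: "nat \<Rightarrow> nat" assume r: "strict_mono r"
    show "\<forall>\<^sub>F n in sequentially. r n > 0"
    proof (rule eventually_sequentiallyI[of 1])
      fix n :: nat assume "1 \<le> n" with seq_suble[OF r, of n] show "r n > 0" by simp
    qed
  qed
  have a: "(\<lambda>n. mm S L1 (Av Q S (r2 n)) x z) \<longlonglongrightarrow> mm S L1 L2 x z"
    unfolding mm_def using xz by (intro tendsto_sum tendsto_mult_left L2) auto
  have "\<forall>\<^sub>F n in sequentially. mm S L1 (Av Q S (r2 n)) x z = L1 x z"
    using ev[OF r2] by eventually_elim (rule mm_L_Av[OF fin LP xz])
  then have "((\<lambda>n. L1 x z) \<longlongrightarrow> mm S L1 L2 x z) sequentially"
    by (rule Lim_transform_eventually[OF a])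
  then have 1: "mm S L1 L2 x z = L1 x z" using LIMSEQ_const_iff by metis
  have b: "(\<lambda>n. mm S (Av Q S (r1 n)) L2 x z) \<longlonglongrightarrow> mm S L1 L2 x z"
    unfolding mm_def using xz by (intro tendsto_sum tendsto_mult_right L1) auto
  have "\<forall>\<^sub>F n in sequentially. mm S (Av Q S (r1 n)) L2 x z = L2 x z"
    using ev[OF r1] by eventually_elim (rule mm_Av_L[OF fin PL xz])
  then have "((\<lambda>n. L2 x z) \<longlongrightarrow> mm S L1 L2 x z) sequentially"
    by (rule Lim_transform_eventually[OF b])
  then have 2: "mm S L1 L2 x z = L2 x z" using LIMSEQ_const_iff by metis
  from 1 2 show ?thesis by simp
qed

lemma bolzano_fin:
  fixes f :: "nat \<Rightarrow> 'i \<Rightarrow> real"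
  assumes "finite I" and "\<And>i n. i \<in> I \<Longrightarrow> \<bar>f n i\<bar> \<le> B"
  shows "\<exists>r. strict_mono r \<and> (\<forall>i\<in>I. convergent (\<lambda>n. f (r n) i))"
  using assms
proof (induction I rule: finite_induct)
  case empty
  then show ?case by (auto intro: strict_mono_id[unfolded id_def])
next
  case (insert j I)
  then obtain r where r: "strict_mono r" "\<forall>i\<in>I. convergent (\<lambda>n. f (r n) i)" by auto
  have "bounded (range (\<lambda>n. f (r n) j))"
    unfolding bounded_iff using insert.prems by auto
  then obtain l r' where r': "strict_mono r'" "((\<lambda>n. f (r n) j) \<circ> r') \<longlonglongrightarrow> l"
    using bounded_imp_convergent_subsequence by blast
  have "strict_mono (r \<circ> r')" using r r' by (simp add: strict_mono_o)
  moreover have "\<forall>i\<in>insert j I. convergent (\<lambda>n. f ((r \<circ> r') n) i)"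
  proof
    fix i assume "i \<in> insert j I"
    then show "convergent (\<lambda>n. f ((r \<circ> r') n) i)"
    proof
      assume "i = j" then show ?thesis using r'(2) by (auto simp: convergent_def o_def)
    next
      assume "i \<in> I"
      then have "convergent ((\<lambda>n. f (r n) i) \<circ> r')" using r convergent_subseq_convergent r' by blast
      then show ?thesis by (simp add: o_def)
    qed
  qed
  ultimately show ?case by blast
qed



lemma prob_fin:
  assumes "finite S" "set_pmf p \<subseteq> S"
  shows "measure_pmf.prob p A = (\<Sum>z\<in>S\<inter>A. pmf p z)"
proof -
  have "measure_pmf.prob p A = measure_pmf.prob p (A \<inter> set_pmf p)" by (simp add: measure_Int_set_pmf)
  also have "A \<inter> set_pmf p = (S \<inter> A) \<inter> set_pmf p" using assms by auto
  also have "measure_pmf.prob p ((S \<inter> A) \<inter> set_pmf p) = measure_pmf.prob p (S \<inter> A)" by (simp add: measure_Int_set_pmf)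
  also have "\<dots> = (\<Sum>z\<in>S\<inter>A. pmf p z)" using assms by (simp add: measure_measure_pmf_finite)
  finally show ?thesis .
qed

lemma cesaro_conv:
  assumes fin: "finite S" and mu: "set_pmf \<mu> \<subseteq> S" and cl: "\<And>x. x \<in> S \<Longrightarrow> set_pmf (Q x) \<subseteq> S"
  shows "convergent (\<lambda>T. (\<Sum>t<T. measure_pmf.prob (mc_dist Q \<mu> t) A) / real T)"
proof -
  define F where "F M = (\<Sum>x\<in>S. pmf \<mu> x * (\<Sum>z\<in>S\<inter>A. M x z))" for M :: "'a \<Rightarrow> 'a \<Rightarrow> real"
  define a where "a T = (\<Sum>t<T. measure_pmf.prob (mc_dist Q \<mu> t) A) / real T" for T
  have aF: "a T = F (Av Q S T)" for T
  proof -
    have "(\<Sum>t<T. measure_pmf.prob (mc_dist Q \<mu> t) A) = (\<Sum>t<T. \<Sum>z\<in>S\<inter>A. \<Sum>x\<in>S. pmf \<mu> x * Pt Q S t x z)"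
      using prob_fin[OF fin mc_support[OF mu cl]] pmf_mc[OF fin mu cl] by simp
    also have "\<dots> = (\<Sum>z\<in>S\<inter>A. \<Sum>t<T. \<Sum>x\<in>S. pmf \<mu> x * Pt Q S t x z)" by (rule sum.swap)
    also have "\<dots> = (\<Sum>z\<in>S\<inter>A. \<Sum>x\<in>S. \<Sum>t<T. pmf \<mu> x * Pt Q S t x z)" by (rule sum.cong[OF refl], rule sum.swap)
    also have "\<dots> = (\<Sum>x\<in>S. \<Sum>z\<in>S\<inter>A. \<Sum>t<T. pmf \<mu> x * Pt Q S t x z)" by (rule sum.swap)
    finally show ?thesis unfolding a_def F_def Av_def
      by (simp add: sum_divide_distrib sum_distrib_left)
  qed
  have step: "\<exists>r L. strict_mono r \<and> (\<forall>x\<in>S. \<forall>z\<in>S. (\<lambda>n. Av Q S (s (r n)) x z) \<longlonglongrightarrow> L x z)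
      \<and> (\<lambda>n. a (s (r n))) \<longlonglongrightarrow> F L" for s :: "nat \<Rightarrow> nat"
  proof -
    have "\<exists>r. strict_mono r \<and> (\<forall>i\<in>S \<times> S. convergent (\<lambda>n. (\<lambda>n (x, z). Av Q S (s n) x z) (r n) i))"
      by (rule bolzano_fin[where B=1]) (use fin Av_bounds[where S=S and Q=Q, OF fin cl] in auto)
    then obtain r where r: "strict_mono r" and c: "\<And>x z. x \<in> S \<Longrightarrow> z \<in> S \<Longrightarrow> convergent (\<lambda>n. Av Q S (s (r n)) x z)"
      by fastforce
    define L where "L x z = lim (\<lambda>n. Av Q S (s (r n)) x z)" for x z
    have L: "\<forall>x\<in>S. \<forall>z\<in>S. (\<lambda>n. Av Q S (s (r n)) x z) \<longlonglongrightarrow> L x z"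
      using c unfolding L_def by (simp add: convergent_LIMSEQ_iff)
    have "(\<lambda>n. F (Av Q S (s (r n)))) \<longlonglongrightarrow> F L"
      unfolding F_def using L by (intro tendsto_sum tendsto_mult_left) auto
    then show ?thesis using r L aF by auto
  qed
  obtain r1 L1 where r1: "strict_mono r1" and L1: "\<forall>x\<in>S. \<forall>z\<in>S. (\<lambda>n. Av Q S (id (r1 n)) x z) \<longlonglongrightarrow> L1 x z"
    and a1: "(\<lambda>n. a (id (r1 n))) \<longlonglongrightarrow> F L1"
    using step[of id] by blast
  have "a \<longlonglongrightarrow> F L1"
  proof (rule ccontr)
    assume "\<not> a \<longlonglongrightarrow> F L1"
    then obtain e where e: "e > 0" and inf: "\<forall>no. \<exists>n\<ge>no. \<not> dist (a n) (F L1) < e"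
      unfolding LIMSEQ_def by blast
    define G where "G = {n. \<not> dist (a n) (F L1) < e}"
    have G: "infinite G" unfolding G_def infinite_nat_iff_unbounded_le using inf by blast
    define s where "s = enumerate G"
    have s: "strict_mono s" unfolding s_def using G by (rule strict_mono_enumerate)
    have sG: "\<not> dist (a (s n)) (F L1) < e" for n
      using enumerate_in_set[OF G, of n] unfolding s_def G_def by simp
    obtain r2 L2 where r2: "strict_mono r2" and L2: "\<forall>x\<in>S. \<forall>z\<in>S. (\<lambda>n. Av Q S (s (r2 n)) x z) \<longlonglongrightarrow> L2 x z"
      and a2: "(\<lambda>n. a (s (r2 n))) \<longlonglongrightarrow> F L2"
      using step[of s] by blast
    have "L1 x z = L2 x z" if "x \<in> S" "z \<in> S" for x z
    proof (rule limpt_unique[where S=S and Q=Q, OF fin cl r1 _ _ _ that])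
      show "strict_mono (s \<circ> r2)" using s r2 by (simp add: strict_mono_o)
      show "(\<lambda>n. Av Q S (r1 n) x z) \<longlonglongrightarrow> L1 x z" if "x \<in> S" "z \<in> S" for x z
        using L1 that by simp
      show "(\<lambda>n. Av Q S ((s \<circ> r2) n) x z) \<longlonglongrightarrow> L2 x z" if "x \<in> S" "z \<in> S" for x z
        using L2 that by simp
    qed
    then have "F L2 = F L1" unfolding F_def by (intro sum.cong refl arg_cong2[where f="(*)"]) auto
    with a2 have "(\<lambda>n. a (s (r2 n))) \<longlonglongrightarrow> F L1" by simp
    with e obtain no where "\<forall>n\<ge>no. dist (a (s (r2 n))) (F L1) < e" unfolding LIMSEQ_def by blast
    with sG show False by blast
  qed
  then show ?thesis unfolding a_def convergent_def by blast
qed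



lemma exp_mono_pmf:
  fixes f g :: "'a \<Rightarrow> real"
  assumes "finite (set_pmf p)" "\<And>y. y \<in> set_pmf p \<Longrightarrow> f y \<le> g y"
  shows "measure_pmf.expectation p f \<le> measure_pmf.expectation p g"
  by (rule integral_mono_AE) (use assms in \<open>auto intro!: integrable_measure_pmf_finite AE_pmfI\<close>)

lemma exp_bind_fin:
  fixes f :: "'a \<Rightarrow> real"
  assumes fin: "finite S" and p: "set_pmf p \<subseteq> S" and cl: "\<And>x. x \<in> S \<Longrightarrow> set_pmf (Q x) \<subseteq> S"
  shows "measure_pmf.expectation (bind_pmf p Q) f = measure_pmf.expectation p (\<lambda>y. measure_pmf.expectation (Q y) f)"
proof -
  have sb: "set_pmf (bind_pmf p Q) \<subseteq> S" using p cl by auto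
  have "measure_pmf.expectation (bind_pmf p Q) f = (\<Sum>z\<in>S. pmf (bind_pmf p Q) z * f z)"
    by (rule exp_fin[OF fin sb])
  also have "\<dots> = (\<Sum>z\<in>S. \<Sum>y\<in>S. pmf p y * pmf (Q y) z * f z)"
    by (simp add: pmf_bind_fin[OF fin p] sum_distrib_right)
  also have "\<dots> = (\<Sum>y\<in>S. \<Sum>z\<in>S. pmf p y * pmf (Q y) z * f z)" by (rule sum.swap)
  also have "\<dots> = (\<Sum>y\<in>S. pmf p y * (\<Sum>z\<in>S. pmf (Q y) z * f z))"
    by (simp add: sum_distrib_left mult.assoc)
  also have "\<dots> = (\<Sum>y\<in>S. pmf p y * measure_pmf.expectation (Q y) f)"
  proof (rule sum.cong[OF refl])
    fix y assume y: "y \<in> S"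
    show "pmf p y * (\<Sum>z\<in>S. pmf (Q y) z * f z) = pmf p y * measure_pmf.expectation (Q y) f"
      using exp_fin[OF fin cl[OF y], of f] by simp
  qed
  also have "\<dots> = measure_pmf.expectation p (\<lambda>y. measure_pmf.expectation (Q y) f)"
    by (rule exp_fin[OF fin p, symmetric])
  finally show ?thesis .
qed

lemma fixedN:
  fixes S :: "'a set" and Q :: "'a \<Rightarrow> 'a pmf" and \<mu> :: "'a pmf" and V :: "'a \<Rightarrow> real"
    and Vmax \<eta> \<gamma> a1 a2 a3 :: real
  assumes fin: "finite S"
    and init: "set_pmf \<mu> \<subseteq> S"
    and closed: "\<And>x. x \<in> S \<Longrightarrow> set_pmf (Q x) \<subseteq> S"
    and pos: "Vmax > 0" "\<eta> > 0" "\<gamma> > 0" "a2 \<ge> 0" "a3 \<ge> 0"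
    and bnd: "\<And>t x. x \<in> set_pmf (mc_dist Q \<mu> t) \<Longrightarrow> 0 \<le> V x \<and> V x \<le> Vmax"
    and drift: "\<And>t x. x \<in> set_pmf (mc_dist Q \<mu> t) \<Longrightarrow> V x > \<eta> \<Longrightarrow>
        measure_pmf.expectation (Q x) (\<lambda>y. V y - V x) \<le> - \<gamma>"
    and jump_hi: "\<And>t x. x \<in> set_pmf (mc_dist Q \<mu> t) \<Longrightarrow> V x > \<eta> \<Longrightarrow>
        measure_pmf.expectation (Q x) (\<lambda>y. max 0 (V y - V x)) \<le> a1"
    and jump_mid: "\<And>t x. x \<in> set_pmf (mc_dist Q \<mu> t) \<Longrightarrow> \<eta> / 2 < V x \<Longrightarrow> V x \<le> \<eta> \<Longrightarrow>
        measure_pmf.expectation (Q x) (\<lambda>y. max 0 (V y - V x)) \<le> a2"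
    and escape: "\<And>t x. x \<in> set_pmf (mc_dist Q \<mu> t) \<Longrightarrow> V x \<le> \<eta> / 2 \<Longrightarrow>
        measure_pmf.prob (Q x) {y. V y > \<eta> / 2} \<le> a3"
    and small: "a1 \<le> \<gamma> * min 1 (\<eta> / (2 * Vmax)) / 2"
  shows "longrun_prob Q \<mu> {x. V x > \<eta>} \<le> (a2 + Vmax * a3) / (\<gamma> * min 1 (\<eta> / (2 * Vmax)) / 2)"
proof -
  define \<rho> where "\<rho> = min 1 (\<eta> / (2 * Vmax))"
  define c where "c = \<gamma> * \<rho> / 2"
  define \<epsilon> where "\<epsilon> = a2 + Vmax * a3"
  define \<Phi> where "\<Phi> x = max (V x) (\<eta> / 2)" for x
  define p where "p t = mc_dist Q \<mu> t" for t
  have \<rho>pos: "\<rho> > 0" and \<rho>1: "\<rho> \<le> 1" and \<rho>V: "\<rho> * Vmax \<le> \<eta> / 2"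
    using pos unfolding \<rho>_def by (auto simp: min_def field_simps)
  have cpos: "c > 0" unfolding c_def using pos \<rho>pos by simp
  have va3: "Vmax * a3 \<ge> 0" using pos by simp
  have \<epsilon>pos: "\<epsilon> \<ge> 0" unfolding \<epsilon>_def using pos by simp
  have sp: "set_pmf (p t) \<subseteq> S" for t unfolding p_def by (rule mc_support[OF init closed])
  have finp: "finite (set_pmf (p t))" for t using sp fin finite_subset by blast
  have finQ: "x \<in> S \<Longrightarrow> finite (set_pmf (Q x))" for x using closed fin finite_subset by blast
  have succ: "x \<in> set_pmf (p t) \<Longrightarrow> y \<in> set_pmf (Q x) \<Longrightarrow> y \<in> set_pmf (p (Suc t))" for x y t
    unfolding p_def mc_Suc by auto
  have int: "integrable (measure_pmf (Q x)) f" if "x \<in> S" for x and f :: "'a \<Rightarrow> real"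
    by (rule integrable_measure_pmf_finite[OF finQ[OF that]])
  have intp: "integrable (measure_pmf (p t)) f" for t and f :: "'a \<Rightarrow> real"
    by (rule integrable_measure_pmf_finite[OF finp])
  have onestep: "measure_pmf.expectation (Q x) \<Phi> \<le> \<Phi> x + \<epsilon> - c * indicator {x. V x > \<eta>} x"
    if x: "x \<in> set_pmf (p t)" for x t
  proof -
    have xS: "x \<in> S" using x sp by blast
    have bx: "0 \<le> V x" "V x \<le> Vmax" using bnd x unfolding p_def by auto
    have by_: "0 \<le> V y \<and> V y \<le> Vmax" if "y \<in> set_pmf (Q x)" for y
      using bnd succ[OF x that] unfolding p_def by blast
    consider "V x \<le> \<eta> / 2" | "\<eta> / 2 < V x" "V x \<le> \<eta>" | "V x > \<eta>" by linarith
    then show ?thesis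
    proof cases
      case 1
      have "measure_pmf.expectation (Q x) \<Phi> \<le> measure_pmf.expectation (Q x) (\<lambda>y. \<eta> / 2 + Vmax * indicator {y. V y > \<eta> / 2} y)"
      proof (rule exp_mono_pmf[OF finQ[OF xS]])
        fix y assume y: "y \<in> set_pmf (Q x)"
        then show "\<Phi> y \<le> \<eta> / 2 + Vmax * indicator {y. V y > \<eta> / 2} y"
          using by_[OF y] pos unfolding \<Phi>_def by (auto simp: indicator_def)
      qed
      also have "\<dots> = \<eta> / 2 + Vmax * measure_pmf.prob (Q x) {y. V y > \<eta> / 2}"
        using int[OF xS] by (simp add: integral_add)
      also have "\<dots> \<le> \<eta> / 2 + Vmax * a3"
        using escape[of x t] x 1 pos unfolding p_def by (simp add: mult_left_mono)
      finally have E: "measure_pmf.expectation (Q x) \<Phi> \<le> \<eta> / 2 + Vmax * a3" .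
      have "\<Phi> x = \<eta> / 2" using 1 pos unfolding \<Phi>_def by simp
      moreover have "indicator {x. V x > \<eta>} x = (0::real)" using 1 pos by (simp add: indicator_def)
      ultimately show ?thesis using E pos unfolding \<epsilon>_def by simp
    next
      case 2
      have "measure_pmf.expectation (Q x) \<Phi> \<le> measure_pmf.expectation (Q x) (\<lambda>y. V x + max 0 (V y - V x))"
      proof (rule exp_mono_pmf[OF finQ[OF xS]])
        fix y assume "y \<in> set_pmf (Q x)"
        then show "\<Phi> y \<le> V x + max 0 (V y - V x)"
          using 2 unfolding \<Phi>_def by (auto simp: max_def)
      qed
      also have "\<dots> = V x + measure_pmf.expectation (Q x) (\<lambda>y. max 0 (V y - V x))"
        using int[OF xS] by (simp add: integral_add)
      also have "\<dots> \<le> V x + a2"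
        using jump_mid[of x t] x 2 unfolding p_def by simp
      finally have E: "measure_pmf.expectation (Q x) \<Phi> \<le> V x + a2" .
      have "\<Phi> x = V x" using 2 pos unfolding \<Phi>_def by simp
      moreover have "indicator {x. V x > \<eta>} x = (0::real)" using 2 by (simp add: indicator_def)
      ultimately show ?thesis using E va3 unfolding \<epsilon>_def by simp
    next
      case 3
      have "measure_pmf.expectation (Q x) \<Phi> \<le> measure_pmf.expectation (Q x) (\<lambda>y. V x + \<rho> * (V y - V x) + max 0 (V y - V x))"
      proof (rule exp_mono_pmf[OF finQ[OF xS]])
        fix y assume y: "y \<in> set_pmf (Q x)"
        have "\<rho> * (V x - V y) \<le> \<rho> * Vmax" using by_[OF y] bx \<rho>pos by (intro mult_left_mono) auto
        moreover have "\<rho> * (V x - V y) \<le> V x - V y" if "V y < V x"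
          using \<rho>1 that by (simp add: mult_left_le_one_le)
        moreover have "0 \<le> \<rho> * (V y - V x)" if "V y \<ge> V x"
          using \<rho>pos that by simp
        ultimately show "\<Phi> y \<le> V x + \<rho> * (V y - V x) + max 0 (V y - V x)"
          using 3 \<rho>V unfolding \<Phi>_def by (auto simp: right_diff_distrib max_def split: if_splits)
      qed
      also have "\<dots> = V x + \<rho> * measure_pmf.expectation (Q x) (\<lambda>y. V y - V x)
                     + measure_pmf.expectation (Q x) (\<lambda>y. max 0 (V y - V x))"
        using int[OF xS] by (simp add: integral_add)
      also have "\<dots> \<le> V x + \<rho> * (- \<gamma>) + a1"
        using drift[of x t] jump_hi[of x t] x 3 \<rho>pos unfolding p_def
        by (intro add_mono mult_left_mono) auto
      finally have E: "measure_pmf.expectation (Q x) \<Phi> \<le> V x + \<rho> * (- \<gamma>) + a1" .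
      have "\<Phi> x = V x" using 3 pos unfolding \<Phi>_def by simp
      moreover have "indicator {x. V x > \<eta>} x = (1::real)" using 3 by (simp add: indicator_def)
      moreover have "a1 \<le> c" using small unfolding c_def \<rho>_def by simp
      moreover have "\<rho> * (- \<gamma>) = - 2 * c" unfolding c_def by simp
      ultimately show ?thesis using E \<epsilon>pos by simp
    qed
  qed
  define P where "P t = measure_pmf.prob (p t) {x. V x > \<eta>}" for t
  have evol: "measure_pmf.expectation (p (Suc t)) \<Phi> \<le> measure_pmf.expectation (p t) \<Phi> + \<epsilon> - c * P t" for t
  proof -
    have "measure_pmf.expectation (p (Suc t)) \<Phi> = measure_pmf.expectation (p t) (\<lambda>y. measure_pmf.expectation (Q y) \<Phi>)"
      unfolding p_def mc_Suc by (rule exp_bind_fin[OF fin mc_support[OF init closed] closed])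
    also have "\<dots> \<le> measure_pmf.expectation (p t) (\<lambda>x. \<Phi> x + \<epsilon> - c * indicator {x. V x > \<eta>} x)"
      by (rule exp_mono_pmf[OF finp onestep])
    also have "\<dots> = measure_pmf.expectation (p t) \<Phi> + \<epsilon> - c * P t"
      unfolding P_def using intp by (simp add: integral_add integral_diff)
    finally show ?thesis .
  qed
  have sumb: "measure_pmf.expectation (p T) \<Phi> + c * (\<Sum>t<T. P t) \<le> measure_pmf.expectation (p 0) \<Phi> + real T * \<epsilon>" for T
  proof (induction T)
    case 0 then show ?case by simp
  next
    case (Suc T) then show ?case using evol[of T] by (simp add: distrib_left algebra_simps)
  qed
  have lowb: "\<eta> / 2 \<le> measure_pmf.expectation (p t) \<Phi>" for t
  proof -
    have "measure_pmf.expectation (p t) (\<lambda>_. \<eta> / 2) \<le> measure_pmf.expectation (p t) \<Phi>"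
      by (rule exp_mono_pmf[OF finp]) (simp add: \<Phi>_def)
    then show ?thesis by simp
  qed
  have upb: "measure_pmf.expectation (p 0) \<Phi> \<le> \<eta> / 2 + Vmax"
  proof -
    have "measure_pmf.expectation (p 0) \<Phi> \<le> measure_pmf.expectation (p 0) (\<lambda>_. \<eta> / 2 + Vmax)"
    proof (rule exp_mono_pmf[OF finp])
      fix y assume "y \<in> set_pmf (p 0)"
      then show "\<Phi> y \<le> \<eta> / 2 + Vmax" using bnd[of y 0] pos unfolding p_def \<Phi>_def by auto
    qed
    then show ?thesis by simp
  qed
  define a where "a T = (\<Sum>t<T. P t) / real T" for T
  have abound: "a T \<le> Vmax / c * (1 / real T) + \<epsilon> / c" if "T \<ge> 1" for T
  proof -
    have "c * (\<Sum>t<T. P t) \<le> Vmax + real T * \<epsilon>" using sumb[of T] lowb[of T] upb by linarith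
    then have "(\<Sum>t<T. P t) \<le> (Vmax + real T * \<epsilon>) / c" using cpos by (simp add: field_simps)
    then show ?thesis unfolding a_def using that cpos by (simp add: field_simps)
  qed
  have conv: "convergent a"
    unfolding a_def P_def p_def by (rule cesaro_conv[OF fin init closed])
  have l1: "a \<longlonglongrightarrow> longrun_prob Q \<mu> {x. V x > \<eta>}"
    using conv unfolding longrun_prob_def a_def P_def p_def by (simp add: convergent_LIMSEQ_iff)
  have l2: "(\<lambda>T. Vmax / c * (1 / real T) + \<epsilon> / c) \<longlonglongrightarrow> Vmax / c * 0 + \<epsilon> / c"
    by (intro tendsto_add tendsto_mult_left lim_inverse_n' tendsto_const)
  have "longrun_prob Q \<mu> {x. V x > \<eta>} \<le> Vmax / c * 0 + \<epsilon> / c"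
    by (rule LIMSEQ_le[OF l1 l2]) (use abound in auto)
  then show ?thesis unfolding c_def \<epsilon>_def \<rho>_def by simp
qed



theorem lemma8:
  fixes S :: "nat \<Rightarrow> 'a set"
    and Q :: "nat \<Rightarrow> 'a \<Rightarrow> 'a pmf"
    and \<mu> :: "nat \<Rightarrow> 'a pmf"
    and V :: "nat \<Rightarrow> 'a \<Rightarrow> real"
    and Vmax \<eta> \<gamma> C C' K :: real
  assumes fin: "\<And>N. finite (S N)"
    and init: "\<And>N. set_pmf (\<mu> N) \<subseteq> S N"
    and closed: "\<And>N x. x \<in> S N \<Longrightarrow> set_pmf (Q N x) \<subseteq> S N"
    and pos: "Vmax > 0" "\<eta> > 0" "\<gamma> > 0" "C > 0" "C' > 0" "K > 0"
    and bnd: "\<And>N t x. x \<in> set_pmf (mc_dist (Q N) (\<mu> N) t) \<Longrightarrow> 0 \<le> V N x \<and> V N x \<le> Vmax"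
    and drift: "\<And>N t x. x \<in> set_pmf (mc_dist (Q N) (\<mu> N) t) \<Longrightarrow> V N x > \<eta> \<Longrightarrow>
        measure_pmf.expectation (Q N x) (\<lambda>y. V N y - V N x) \<le> - \<gamma>"
    and jump_hi: "\<And>N t x. x \<in> set_pmf (mc_dist (Q N) (\<mu> N) t) \<Longrightarrow> V N x > \<eta> \<Longrightarrow>
        measure_pmf.expectation (Q N x) (\<lambda>y. max 0 (V N y - V N x)) \<le> K / sqrt (real N)"
    and jump_mid: "\<And>N t x. x \<in> set_pmf (mc_dist (Q N) (\<mu> N) t) \<Longrightarrow> \<eta> / 2 < V N x \<Longrightarrow> V N x \<le> \<eta> \<Longrightarrow>
        measure_pmf.expectation (Q N x) (\<lambda>y. max 0 (V N y - V N x)) \<le> K * exp (- C * real N)"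
    and escape: "\<And>N t x. x \<in> set_pmf (mc_dist (Q N) (\<mu> N) t) \<Longrightarrow> V N x \<le> \<eta> / 2 \<Longrightarrow>
        measure_pmf.prob (Q N x) {y. V N y > \<eta> / 2} \<le> K * exp (- C' * real N)"
  shows "\<exists>C'' K''. C'' > 0 \<and>
    (\<forall>\<^sub>F N in sequentially. longrun_prob (Q N) (\<mu> N) {x. V N x > \<eta>} \<le> K'' * exp (- C'' * real N))"
proof -
  define \<rho> where "\<rho> = min 1 (\<eta> / (2 * Vmax))"
  define m where "m = min C C'"
  define d where "d = \<gamma> * \<rho> / 2"
  define b where "b = K / d"
  have \<rho>pos: "\<rho> > 0" unfolding \<rho>_def using pos by simp
  have dpos: "d > 0" unfolding d_def using pos \<rho>pos by simp
  have bpos: "b > 0" unfolding b_def using pos dpos by simp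
  have mpos: "m > 0" unfolding m_def using pos by simp
  have "\<forall>\<^sub>F N in sequentially. longrun_prob (Q N) (\<mu> N) {x. V N x > \<eta>} \<le> ((K + Vmax * K) / d) * exp (- m * real N)"
  proof (rule eventually_sequentiallyI[of "nat \<lceil>b\<^sup>2\<rceil>"])
    fix N :: nat assume N: "nat \<lceil>b\<^sup>2\<rceil> \<le> N"
    have "b\<^sup>2 \<le> real N" using N by linarith
    then have "b \<le> sqrt (real N)" by (rule real_le_rsqrt)
    moreover have sq: "sqrt (real N) > 0" using \<open>b \<le> sqrt (real N)\<close> bpos by linarith
    ultimately have "K \<le> d * sqrt (real N)" using dpos unfolding b_def by (simp add: field_simps)
    then have small: "K / sqrt (real N) \<le> d"
      using sq by (simp add: divide_le_eq)
    have main: "longrun_prob (Q N) (\<mu> N) {x. V N x > \<eta>} \<le> (K * exp (- C * real N) + Vmax * (K * exp (- C' * real N))) / (\<gamma> * min 1 (\<eta> / (2 * Vmax)) / 2)"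
      by (rule fixedN[OF fin init closed pos(1,2,3) _ _ bnd drift jump_hi jump_mid escape])
         (use pos small in \<open>auto simp: d_def \<rho>_def\<close>)
    have e1: "exp (- C * real N) \<le> exp (- m * real N)" unfolding m_def by (simp add: mult_right_mono)
    have e2: "exp (- C' * real N) \<le> exp (- m * real N)" unfolding m_def by (simp add: mult_right_mono)
    have "K * exp (- C * real N) + Vmax * (K * exp (- C' * real N)) \<le> K * exp (- m * real N) + Vmax * (K * exp (- m * real N))"
      using e1 e2 pos by (intro add_mono mult_left_mono) auto
    then have "(K * exp (- C * real N) + Vmax * (K * exp (- C' * real N))) / d \<le> ((K + Vmax * K) / d) * exp (- m * real N)"
    proof -
      have "(K * exp (- C * real N) + Vmax * (K * exp (- C' * real N))) / d \<le> (K * exp (- m * real N) + Vmax * (K * exp (- m * real N))) / d"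
        by (rule divide_right_mono[OF \<open>K * exp (- C * real N) + Vmax * (K * exp (- C' * real N)) \<le> _\<close>]) (use dpos in simp)
      also have "\<dots> = ((K + Vmax * K) / d) * exp (- m * real N)" by (simp add: algebra_simps add_divide_distrib)
      finally show ?thesis .
    qed
    with main show "longrun_prob (Q N) (\<mu> N) {x. V N x > \<eta>} \<le> ((K + Vmax * K) / d) * exp (- m * real N)"
      unfolding d_def \<rho>_def by linarith
  qed
  with mpos show ?thesis by blast
qed

end
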